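(* Let $X$ be a topological space possessing an infinite metrizable gauge, let $\kappa$ be a regular cardinal with $\kappa\in\mathrm{MG}(X)$, let $A$ be a closed subset of $X$, let $G\in\mathcal{G}_\kappa$, let $S$ be a Dedekind complete g-characteristic subset of $G$, and let $h\in\mathrm{Ult}(X;S)$. Define $\Theta\colon X\times X\to S$ by $\Theta(x,y)=\min\{h(x,y),\max\{\varrho_{h,A}(x),\varrho_{h,A}(y)\}\}$. Then: (1) $\Theta$ is an $S$-pseudo-ultrametric on $X$, i.e. $\Theta(x,x)=0$, $\Theta\ge0$, $\Theta(x,y)=\Theta(y,x)$ and $\Theta(x,y)\le\max\{\Theta(x,z),\Theta(z,y)\}$ for all $x,y,z\in X$; (2) $\Theta(x,y)=0$ for all $x,y\in A$; (3) the restriction of $\Theta$ to $(X\setminus A)\times(X\setminus A)$ is an $S$-ultrametric on $X\setminus A$ generating the subspace topology of $X\setminus A$.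
   Context: A linearly ordered Abelian group is an Abelian group with a linear order compatible with addition. For $x,y\in G_{>0}$, $x\asymp y$ iff $y\le nx$ and $x\le my$ for some $n,m\in\mathbb{Z}_{\ge1}$; $\mathrm{Arc}(G)=G_{>0}/\asymp$, ordered by $[x]\preceq[y]$ iff ($nx<y$ for all $n$) or $x\asymp y$; $\mathrm{Arc}(G)^\perp$ is $\mathrm{Arc}(G)$ with a new least element adjoined. For a bottomed linearly ordered set $T$ (least element $\perp_T$, $T^*=T\setminus\{\perp_T\}$), $\chi(T)$ is the least cardinal $\kappa>0$ such that some strictly decreasing family $(s_\alpha)_{\alpha<\kappa}$ in $T^*$ has every $t\in T^*$ bounded below by some $s_\alpha$. A $G$-metric: $d\colon X^2\to G$, $d(x,y)=0\iff x=y$, $d\ge0$, symmetric, triangle inequality; $\mathrm{Met}(X;G)$ those generating the topology of $X$ via open balls. $\mathrm{MG}(X)$: cardinals $\kappa$ with some $G$, $\chi(\mathrm{Arc}(G)^\perp)=\kappa$, $\mathrm{Met}(X;G)\ne\emptyset$; infinite metrizable gauge: some $\kappa\in\mathrm{MG}(X)$ with $\kappa\ge\omega_0$. $\mathcal{G}_\kappa$: groups with $\chi(\mathrm{Arc}(G)^\perp)=\kappa$. A subset $S\subseteq G$ is g-characteristic if $S\subseteq G_{\ge 0}$, $0\in S$, and every $s\in G_{>0}$ has some $t\in S\setminus\{0\}$ with $t\le s$; $S$ is Dedekind complete if every non-empty subset of $S$ bounded above in $S$ has a supremum in $S$ (equivalently, every non-empty subset bounded below has an infimum in $S$). An $S$-ultrametric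 is $d\colon X^2\to S$ with $d(x,y)=0\iff x=y$, symmetric, $d(x,y)\le\max\{d(x,z),d(z,y)\}$; $\mathrm{Ult}(X;S)$ is the set of those generating the topology of $X$ via open balls of radii in $S\setminus\{0\}$. $\varrho_{h,A}(x)=\inf\{h(x,a):a\in A\}$, the infimum taken in $S$. *)

theory Defs
  imports "HOL-Analysis.Analysis"
begin

definition nsm :: "nat \<Rightarrow> 'g::ab_group_add \<Rightarrow> 'g" where
  "nsm n x = ((\<lambda>y. y + x) ^^ n) 0"

definition arc_equiv :: "'g::linordered_ab_group_add \<Rightarrow> 'g \<Rightarrow> bool" where
  "arc_equiv x y \<longleftrightarrow> (\<exists>n m. n \<ge> 1 \<and> m \<ge> 1 \<and> y \<le> nsm n x \<and> x \<le> nsm m y)"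

definition arc_class :: "'g::linordered_ab_group_add \<Rightarrow> 'g set" where
  "arc_class x = {y. 0 < y \<and> arc_equiv x y}"

definition Arc :: "'g::linordered_ab_group_add itself \<Rightarrow> 'g set set" where
  "Arc _ = arc_class ` {x. 0 < x}"

definition arc_le :: "'g::linordered_ab_group_add set \<Rightarrow> 'g set \<Rightarrow> bool" where
  "arc_le C D \<longleftrightarrow> (\<exists>x y. 0 < x \<and> 0 < y \<and> C = arc_class x \<and> D = arc_class y \<and>
       ((\<forall>n::nat. n \<ge> 1 \<longrightarrow> nsm n x < y) \<or> arc_equiv x y))"

text \<open>Cardinals are represented by cardinal orders (well-orders) k :: 'k rel;
  a family indexed by the ordinals below k is a map on Field k.
  For T = Arc(G)^perp we have T* = Arc(G).\<close>
definition coinitial_decr_family ::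
    "'t set \<Rightarrow> ('t \<Rightarrow> 't \<Rightarrow> bool) \<Rightarrow> 'k rel \<Rightarrow> ('k \<Rightarrow> 't) \<Rightarrow> bool" where
  "coinitial_decr_family Ts le k s \<longleftrightarrow>
     (\<forall>\<alpha>\<in>Field k. s \<alpha> \<in> Ts) \<and>
     (\<forall>\<alpha>\<in>Field k. \<forall>\<beta>\<in>Field k. (\<alpha>, \<beta>) \<in> k \<and> \<alpha> \<noteq> \<beta> \<longrightarrow> le (s \<beta>) (s \<alpha>) \<and> s \<beta> \<noteq> s \<alpha>) \<and>
     (\<forall>t\<in>Ts. \<exists>\<alpha>\<in>Field k. le (s \<alpha>) t)"

text \<open>chi(T) = k: k is a nonzero cardinal admitting such a family and no smaller
  cardinal does (every cardinal smaller than k is represented on a subset of the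
  field of k, hence by an order on the same type).\<close>
definition chi_is :: "'t set \<Rightarrow> ('t \<Rightarrow> 't \<Rightarrow> bool) \<Rightarrow> 'k rel \<Rightarrow> bool" where
  "chi_is Ts le k \<longleftrightarrow> Card_order k \<and> Field k \<noteq> {} \<and>
     (\<exists>s. coinitial_decr_family Ts le k s) \<and>
     (\<forall>r::'k rel. Card_order r \<and> Field r \<noteq> {} \<and> (r, k) \<in> ordLess \<longrightarrow>
        \<not> (\<exists>s. coinitial_decr_family Ts le r s))"

definition chi_Arc :: "'g::linordered_ab_group_add itself \<Rightarrow> 'k rel \<Rightarrow> bool" where
  "chi_Arc G k \<longleftrightarrow> chi_is (Arc G) arc_le k"

definition generates_topology :: "'a topology \<Rightarrow> ('a \<Rightarrow> 'a \<Rightarrow> 'g::linorder) \<Rightarrow> 'g set \<Rightarrow> bool" where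
  "generates_topology X d R \<longleftrightarrow>
     (\<forall>U. openin X U \<longleftrightarrow> U \<subseteq> topspace X \<and>
        (\<forall>x\<in>U. \<exists>r\<in>R. {y\<in>topspace X. d x y < r} \<subseteq> U))"

definition is_Gmetric :: "'a set \<Rightarrow> ('a \<Rightarrow> 'a \<Rightarrow> 'g::linordered_ab_group_add) \<Rightarrow> bool" where
  "is_Gmetric M d \<longleftrightarrow>
     (\<forall>x\<in>M. \<forall>y\<in>M. (d x y = 0 \<longleftrightarrow> x = y) \<and> 0 \<le> d x y \<and> d x y = d y x) \<and>
     (\<forall>x\<in>M. \<forall>y\<in>M. \<forall>z\<in>M. d x y \<le> d x z + d z y)"

definition Met :: "'a topology \<Rightarrow> ('a \<Rightarrow> 'a \<Rightarrow> 'g::linordered_ab_group_add) \<Rightarrow> bool" where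
  "Met X d \<longleftrightarrow> is_Gmetric (topspace X) d \<and> generates_topology X d {r. 0 < r}"

definition g_characteristic :: "'g::linordered_ab_group_add set \<Rightarrow> bool" where
  "g_characteristic S \<longleftrightarrow> S \<subseteq> {x. 0 \<le> x} \<and> 0 \<in> S \<and>
     (\<forall>s. 0 < s \<longrightarrow> (\<exists>t\<in>S - {0}. t \<le> s))"

definition is_sup_in :: "'g::linorder set \<Rightarrow> 'g set \<Rightarrow> 'g \<Rightarrow> bool" where
  "is_sup_in S B s \<longleftrightarrow> s \<in> S \<and> (\<forall>b\<in>B. b \<le> s) \<and> (\<forall>u\<in>S. (\<forall>b\<in>B. b \<le> u) \<longrightarrow> s \<le> u)"

definition is_inf_in :: "'g::linorder set \<Rightarrow> 'g set \<Rightarrow> 'g \<Rightarrow> bool" where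
  "is_inf_in S B s \<longleftrightarrow> s \<in> S \<and> (\<forall>b\<in>B. s \<le> b) \<and> (\<forall>u\<in>S. (\<forall>b\<in>B. u \<le> b) \<longrightarrow> u \<le> s)"

definition dedekind_complete :: "'g::linorder set \<Rightarrow> bool" where
  "dedekind_complete S \<longleftrightarrow>
     (\<forall>B. B \<subseteq> S \<and> B \<noteq> {} \<and> (\<exists>u\<in>S. \<forall>b\<in>B. b \<le> u) \<longrightarrow> (\<exists>s. is_sup_in S B s))"

definition is_S_ultrametric :: "'a set \<Rightarrow> 'g::linordered_ab_group_add set \<Rightarrow> ('a \<Rightarrow> 'a \<Rightarrow> 'g) \<Rightarrow> bool" where
  "is_S_ultrametric M S d \<longleftrightarrow>
     (\<forall>x\<in>M. \<forall>y\<in>M. d x y \<in> S \<and> (d x y = 0 \<longleftrightarrow> x = y) \<and> d x y = d y x) \<and>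
     (\<forall>x\<in>M. \<forall>y\<in>M. \<forall>z\<in>M. d x y \<le> max (d x z) (d z y))"

definition Ult :: "'a topology \<Rightarrow> 'g::linordered_ab_group_add set \<Rightarrow> ('a \<Rightarrow> 'a \<Rightarrow> 'g) \<Rightarrow> bool" where
  "Ult X S d \<longleftrightarrow> is_S_ultrametric (topspace X) S d \<and> generates_topology X d (S - {0})"

definition rho :: "'g::linorder set \<Rightarrow> ('a \<Rightarrow> 'a \<Rightarrow> 'g) \<Rightarrow> 'a set \<Rightarrow> 'a \<Rightarrow> 'g" where
  "rho S h A x = (THE r. is_inf_in S {h x a | a. a \<in> A} r)"

definition Theta :: "'g::linorder set \<Rightarrow> ('a \<Rightarrow> 'a \<Rightarrow> 'g) \<Rightarrow> 'a set \<Rightarrow> 'a \<Rightarrow> 'a \<Rightarrow> 'g" where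
  "Theta S h A x y = min (h x y) (max (rho S h A x) (rho S h A y))"

end

theory Submission
  imports Defs
begin

lemma inf_exists:
  fixes S :: "'g::linorder set"
  assumes dc: "dedekind_complete S" and BS: "B \<subseteq> S" and Bne: "B \<noteq> {}"
    and z: "z \<in> S" and zb: "\<forall>b\<in>B. z \<le> b"
  shows "\<exists>s. is_inf_in S B s"
proof -
  define L where "L = {u\<in>S. \<forall>b\<in>B. u \<le> b}"
  obtain b0 where b0: "b0 \<in> B" using Bne by blast
  have "L \<subseteq> S \<and> L \<noteq> {} \<and> (\<exists>u\<in>S. \<forall>b\<in>L. b \<le> u)"
    using z zb b0 BS unfolding L_def by blast
  then obtain s where s: "is_sup_in S L s" using dc unfolding dedekind_complete_def by blast
  have "is_inf_in S B s"
    using s BS unfolding is_sup_in_def is_inf_in_def L_def by blast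
  then show ?thesis by blast
qed

lemma inf_unique:
  fixes S :: "'g::linorder set"
  shows "is_inf_in S B s \<Longrightarrow> is_inf_in S B t \<Longrightarrow> s = t"
  unfolding is_inf_in_def by (meson antisym)

lemma rho_is_inf:
  fixes S :: "'g::linorder set"
  assumes "is_inf_in S {h x a | a. a \<in> A} s"
  shows "rho S h A x = s"
  unfolding rho_def using assms inf_unique by blast

lemma ult_aux:
  "\<lbrakk>(hxy::'a::linorder) \<le> max hxz hzy; a \<le> max hxz c; c \<le> max hxz a; b \<le> max hzy c; c \<le> max hzy b\<rbrakk>
  \<Longrightarrow> min hxy (max a b) \<le> max (min hxz (max a c)) (min hzy (max c b))"
  unfolding le_max_iff_disj min_le_iff_disj max_def min_def by (smt (verit) linorder_linear order_trans)

theorem proposition4p2: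
  fixes X :: "'a topology"
    and lam :: "'l rel" and d1 :: "'a \<Rightarrow> 'a \<Rightarrow> 'g1::linordered_ab_group_add"
    and k :: "'k rel" and d2 :: "'a \<Rightarrow> 'a \<Rightarrow> 'g2::linordered_ab_group_add"
    and A :: "'a set" and S :: "'g::linordered_ab_group_add set"
    and h :: "'a \<Rightarrow> 'a \<Rightarrow> 'g"
  assumes gauge_chi: "chi_Arc TYPE('g1) lam" and gauge_inf: "infinite (Field lam)"
    and gauge_met: "Met X d1"
    and k_card: "Card_order k" and k_regular: "regularCard k"
    and k_MG_chi: "chi_Arc TYPE('g2) k" and k_MG_met: "Met X d2"
    and A_closed: "closedin X A" and A_ne: "A \<noteq> {}"
    and G_k: "chi_Arc TYPE('g) k"
    and S_dc: "dedekind_complete S" and S_gc: "g_characteristic S"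
    and h_Ult: "Ult X S h"
  shows "(\<forall>x\<in>topspace X. \<forall>y\<in>topspace X. \<forall>z\<in>topspace X.
            Theta S h A x y \<in> S \<and> Theta S h A x x = 0 \<and> 0 \<le> Theta S h A x y \<and>
            Theta S h A x y = Theta S h A y x \<and>
            Theta S h A x y \<le> max (Theta S h A x z) (Theta S h A z y))
       \<and> (\<forall>x\<in>A. \<forall>y\<in>A. Theta S h A x y = 0)
       \<and> Ult (subtopology X (topspace X - A)) S (Theta S h A)"
proof -
  define T where "T = topspace X"
  define M where "M = T - A"
  define r where "r = rho S h A"
  have AT: "A \<subseteq> T" using A_closed closedin_subset T_def by blast
  have S0: "0 \<in> S" and Snn: "\<And>s. s \<in> S \<Longrightarrow> 0 \<le> s"
    using S_gc unfolding g_characteristic_def by auto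
  have hS: "\<And>x y. x \<in> T \<Longrightarrow> y \<in> T \<Longrightarrow> h x y \<in> S"
    and h0: "\<And>x y. x \<in> T \<Longrightarrow> y \<in> T \<Longrightarrow> h x y = 0 \<longleftrightarrow> x = y"
    and hsym: "\<And>x y. x \<in> T \<Longrightarrow> y \<in> T \<Longrightarrow> h x y = h y x"
    and hult: "\<And>x y z. x \<in> T \<Longrightarrow> y \<in> T \<Longrightarrow> z \<in> T \<Longrightarrow> h x y \<le> max (h x z) (h z y)"
    using h_Ult unfolding Ult_def is_S_ultrametric_def T_def by blast+
  have hgen: "generates_topology X h (S - {0})" using h_Ult unfolding Ult_def by blast
  have rinf: "is_inf_in S {h x a | a. a \<in> A} (r x)" if x: "x \<in> T" for x
  proof -
    have B1: "{h x a | a. a \<in> A} \<subseteq> S" using hS x AT by blast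
    have B2: "{h x a | a. a \<in> A} \<noteq> {}" using A_ne by blast
    have B3: "\<forall>b\<in>{h x a | a. a \<in> A}. 0 \<le> b" using hS x AT Snn by blast
    obtain s where s: "is_inf_in S {h x a | a. a \<in> A} s"
      using inf_exists[OF S_dc B1 B2 S0 B3] by blast
    then show ?thesis using rho_is_inf[of S h x A s, OF s] r_def by simp
  qed
  have rS: "r x \<in> S" and rle: "\<And>a. a \<in> A \<Longrightarrow> r x \<le> h x a"
    and rgr: "\<And>u. u \<in> S \<Longrightarrow> (\<And>a. a \<in> A \<Longrightarrow> u \<le> h x a) \<Longrightarrow> u \<le> r x"
    if "x \<in> T" for x
    using rinf[OF that] unfolding is_inf_in_def by blast+
  have rnn: "0 \<le> r x" if "x \<in> T" for x using Snn rS that by blast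
  have rA: "r x = 0" if "x \<in> A" for x
    using rle[of x x] that AT h0[of x x] rnn[of x] by auto
  have Mopen: "openin X M" using A_closed unfolding M_def T_def closedin_def by blast
  have rpos: "0 < r x" if x: "x \<in> M" for x
  proof -
    have "\<exists>e\<in>S - {0}. {y\<in>T. h x y < e} \<subseteq> M"
      using Mopen x hgen unfolding generates_topology_def T_def by blast
    then obtain e where e: "e \<in> S" "e \<noteq> 0" "{y\<in>T. h x y < e} \<subseteq> M" by blast
    have "e \<le> r x"
      using e AT x unfolding M_def by (intro rgr) (auto simp: not_less[symmetric])
    moreover have "0 < e" using e Snn[of e] by auto
    ultimately show ?thesis by simp
  qed
  have rlip: "r x \<le> max (h x y) (r y)" if x: "x \<in> T" and y: "y \<in> T" for x y
  proof (rule ccontr)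
    assume c: "\<not> ?thesis"
    have "\<not> r x \<le> r y" using c by (simp add: le_max_iff_disj)
    then obtain a where a: "a \<in> A" "h y a < r x"
      using rgr[OF y rS[OF x]] by (meson not_le)
    have "h x a \<le> max (h x y) (h y a)" using hult x y a AT by blast
    moreover have "r x \<le> h x a" using rle x a by blast
    ultimately show False using c a
      by (metis le_max_iff_disj max_less_iff_conj not_le order_trans)
  qed
  have Th: "Theta S h A x y = min (h x y) (max (r x) (r y))" for x y
    unfolding Theta_def r_def by simp
  have P1: "\<forall>x\<in>T. \<forall>y\<in>T. \<forall>z\<in>T.
            Theta S h A x y \<in> S \<and> Theta S h A x x = 0 \<and> 0 \<le> Theta S h A x y \<and>
            Theta S h A x y = Theta S h A y x \<and>
            Theta S h A x y \<le> max (Theta S h A x z) (Theta S h A z y)"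
  proof (intro ballI conjI)
    fix x y z assume x: "x \<in> T" and y: "y \<in> T" and z: "z \<in> T"
    show "Theta S h A x y \<in> S" using hS rS x y by (auto simp: Th min_def max_def)
    show "Theta S h A x x = 0" using h0[OF x x] rnn[OF x] by (simp add: Th min_def)
    show "0 \<le> Theta S h A x y" using Snn[OF hS[OF x y]] rnn[OF x] by (simp add: Th le_max_iff_disj)
    show "Theta S h A x y = Theta S h A y x" using hsym x y by (auto simp: Th max.commute)
    have 1: "h x y \<le> max (h x z) (h z y)" using hult x y z by blast
    have 2: "r x \<le> max (h x z) (r z)" "r z \<le> max (h x z) (r x)"
      using rlip x z hsym by (metis)+
    have 3: "r y \<le> max (h z y) (r z)" "r z \<le> max (h z y) (r y)"
      using rlip y z hsym by (metis)+
    show "Theta S h A x y \<le> max (Theta S h A x z) (Theta S h A z y)"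
      unfolding Th using ult_aux[OF 1 2 3] .
  qed
  have P2: "\<forall>x\<in>A. \<forall>y\<in>A. Theta S h A x y = 0"
  proof (intro ballI)
    fix x y assume x: "x \<in> A" and y: "y \<in> A"
    have "0 \<le> h x y" using Snn[OF hS] x y AT by blast
    then show "Theta S h A x y = 0" using rA[OF x] rA[OF y] by (simp add: Th min_def)
  qed
  have TM: "topspace (subtopology X (topspace X - A)) = M"
    unfolding M_def T_def by auto
  have P3: "Ult (subtopology X (topspace X - A)) S (Theta S h A)"
    unfolding Ult_def TM
  proof
    show "is_S_ultrametric M S (Theta S h A)"
      unfolding is_S_ultrametric_def
    proof (intro conjI ballI)
      fix x y z assume x: "x \<in> M" and y: "y \<in> M" and z: "z \<in> M"
      have xT: "x \<in> T" "y \<in> T" "z \<in> T" using x y z M_def by auto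
      show "Theta S h A x y \<in> S" "Theta S h A x y = Theta S h A y x"
        "Theta S h A x y \<le> max (Theta S h A x z) (Theta S h A z y)"
        using P1 xT by blast+
      show "Theta S h A x y = 0 \<longleftrightarrow> x = y"
      proof
        assume "Theta S h A x y = 0"
        show "x = y"
        proof (rule ccontr)
          assume "x \<noteq> y"
          then have "0 < h x y" using h0[OF xT(1,2)] hS[OF xT(1,2)] Snn by (metis order.not_eq_order_implies_strict)
          moreover have "0 < max (r x) (r y)" using rpos[OF x] by (simp add: less_max_iff_disj)
          ultimately have "0 < Theta S h A x y" by (simp add: Th)
          then show False using \<open>Theta S h A x y = 0\<close> by simp
        qed
      next
        assume "x = y" then show "Theta S h A x y = 0" using P1 xT by blast
      qed
    qed
    show "generates_topology (subtopology X (topspace X - A)) (Theta S h A) (S - {0})"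
      unfolding generates_topology_def TM
    proof (intro allI iffI)
      fix U assume U: "openin (subtopology X (topspace X - A)) U"
      then have UX: "openin X U" and UM: "U \<subseteq> M"
        using Mopen openin_open_subtopology M_def T_def by blast+
      have "\<forall>x\<in>U. \<exists>e\<in>S - {0}. {y\<in>M. Theta S h A x y < e} \<subseteq> U"
      proof
        fix x assume xU: "x \<in> U"
        have xM: "x \<in> M" using xU UM by blast
        obtain e where e: "e \<in> S - {0}" "{y\<in>T. h x y < e} \<subseteq> U"
          using UX xU hgen unfolding generates_topology_def T_def by blast
        have rx0: "r x \<noteq> 0" using rpos[OF xM] by simp
        have rx: "r x \<in> S - {0}" using rS[of x] rx0 xM M_def by blast
        have "{y\<in>M. Theta S h A x y < min e (r x)} \<subseteq> U"
        proof
          fix y assume "y \<in> {y\<in>M. Theta S h A x y < min e (r x)}"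
          then have y: "y \<in> M" "min (h x y) (max (r x) (r y)) < min e (r x)" by (auto simp: Th)
          then have "h x y < e" by (auto simp: min_def max_def split: if_splits)
          then show "y \<in> U" using e y M_def by auto
        qed
        moreover have "min e (r x) \<in> S - {0}" using e rx by (auto simp: min_def)
        ultimately show "\<exists>e\<in>S - {0}. {y\<in>M. Theta S h A x y < e} \<subseteq> U" by blast
      qed
      then show "U \<subseteq> M \<and> (\<forall>x\<in>U. \<exists>e\<in>S - {0}. {y\<in>M. Theta S h A x y < e} \<subseteq> U)"
        using UM by blast
    next
      fix U assume U: "U \<subseteq> M \<and> (\<forall>x\<in>U. \<exists>e\<in>S - {0}. {y\<in>M. Theta S h A x y < e} \<subseteq> U)"
      have "\<forall>x\<in>U. \<exists>e\<in>S - {0}. {y\<in>T. h x y < e} \<subseteq> U"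
      proof
        fix x assume xU: "x \<in> U"
        have xM: "x \<in> M" using xU U by blast
        obtain e where e: "e \<in> S - {0}" "{y\<in>M. Theta S h A x y < e} \<subseteq> U"
          using U xU by blast
        have rx0: "r x \<noteq> 0" using rpos[OF xM] by simp
        have rx: "r x \<in> S - {0}" using rS[of x] rx0 xM M_def by blast
        have "{y\<in>T. h x y < min e (r x)} \<subseteq> U"
        proof
          fix y assume "y \<in> {y\<in>T. h x y < min e (r x)}"
          then have y: "y \<in> T" "h x y < e" "h x y < r x" by auto
          have "y \<notin> A" using y rle xM M_def by force
          then have yM: "y \<in> M" using y M_def by auto
          have "Theta S h A x y < e" using y by (simp add: Th min_less_iff_disj)
          then show "y \<in> U" using e yM by auto
        qed
        moreover have "min e (r x) \<in> S - {0}" using e rx by (auto simp: min_def)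
        ultimately show "\<exists>e\<in>S - {0}. {y\<in>T. h x y < e} \<subseteq> U" by blast
      qed
      then have "openin X U"
        using hgen U M_def unfolding generates_topology_def T_def by blast
      then show "openin (subtopology X (topspace X - A)) U"
        using U Mopen openin_open_subtopology M_def T_def by blast
    qed
  qed
  show ?thesis using P1 P2 P3 T_def by blast
qed

end
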